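(* Let $d\ge3$ be odd. The $(d-1)+1$ stacked code (defined in the context) has a transversal logical $\pi/8$ gate: there is a tensor product of single-qubit diagonal $Z$-rotations $\bigotimes_{q}Z(\phi_q)$ over all physical qubits $q$ of the stacked code that acts on the code space as the logical gate $\mathrm{diag}[1,e^{i\pi/4}]$ (equivalently $\mathrm{diag}[e^{-i\pi/8},e^{i\pi/8}]$ up to global phase), possibly followed by a transversal logical $Z$.
   Context: $Z(\phi)=\mathrm{diag}[1,e^{i\pi\phi}]$. Hexagonal 2D color code: for odd $d$, the $[[n,1,d]]$ color code on the hexagonal lattice with triangular boundary, $n=(3d^2+1)/4$, with plaquette stabilizers $G_{P_i}=\bigotimes_{\nu\in P_i}X_\nu$, $H_{P_i}=\bigotimes_{\nu\in P_i}Z_\nu$ and logical operators $X_L=X^{\otimes n}$, $Z_L=Z^{\otimes n}$; fix weight-2 $Z$ edge operators $H_{e_i}$, one per plaquette $P_i$, meeting $P_i$ in exactly one qubit and generating together with the $Z$-plaquettes all $Z$ edge operators. Stacked code: $d-1$ copies (layers $l=1,\dots,d-1$, superscript $(l)$) of this code plus one extra qubit as layer $d$ with $X_L^{(d)}=X$, $Z_L^{(d)}=Z$; its stabilizer group is generated, for $k=1,\dots,(d-1)/2$ and all $i$, by $H_{e_i}^{(2k-1)}H_{e_i}^{(2k)}$, $H_{P_i}^{(2k-1)}$, $H_{P_i}^{(2k-1)}H_{P_i}^{(2k)}$, $G_{P_i}^{(2k-1)}G_{P_i}^{(2k)}$, $X_L^{(2k)}X_L^{(2k+1)}$, $Z_L^{(2k)}Z_L^{(2k+1)}$.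 It encodes one logical qubit with logical $X$ given by $X$ on all qubits and logical $Z$ given by $Z$ on all qubits. "Transversal" here means a product of single-qubit gates acting independently on each physical qubit (the rotation angles may differ between qubits). *)

theory Defs
  imports "HOL-Analysis.Analysis"
begin

text \<open>A pure state on the qubits of type 'q is a function from computational-basis
configurations ('q \<Rightarrow> bool, True = |1>) to amplitudes. For a finite qubit set S,
a state of the S-qubit system is such a function supported on configurations that
are False outside S.\<close>

type_synonym 'q state = "('q \<Rightarrow> bool) \<Rightarrow> complex"

definition flip :: "'q set \<Rightarrow> ('q \<Rightarrow> bool) \<Rightarrow> ('q \<Rightarrow> bool)" where
  "flip A x = (\<lambda>q. if q \<in> A then \<not> x q else x q)"

definition pauliX :: "'q set \<Rightarrow> 'q state \<Rightarrow> 'q state" where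
  "pauliX A \<psi> = (\<lambda>x. \<psi> (flip A x))"

definition pauliZ :: "'q set \<Rightarrow> 'q state \<Rightarrow> 'q state" where
  "pauliZ B \<psi> = (\<lambda>x. (-1) ^ card {q \<in> B. x q} * \<psi> x)"

definition supported_on :: "'q set \<Rightarrow> 'q state \<Rightarrow> bool" where
  "supported_on S \<psi> \<longleftrightarrow> (\<forall>x. \<psi> x \<noteq> 0 \<longrightarrow> {q. x q} \<subseteq> S)"

text \<open>Code space of a CSS stabilizer code on qubits S with X-type generators XG and
Z-type generators ZG (each generator given by its support): the joint +1 eigenspace.\<close>
definition code_space :: "'q set \<Rightarrow> 'q set set \<Rightarrow> 'q set set \<Rightarrow> 'q state set" where
  "code_space S XG ZG =
     {\<psi>. supported_on S \<psi> \<and> (\<forall>A\<in>XG. pauliX A \<psi> = \<psi>) \<and> (\<forall>B\<in>ZG. pauliZ B \<psi> = \<psi>)}"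

text \<open>Transversal diagonal rotation  \<Otimes>_{q\<in>S} Z(\<phi> q),  Z(\<phi>) = diag[1, e^{i \<pi> \<phi>}].\<close>
definition zrot :: "'q set \<Rightarrow> ('q \<Rightarrow> real) \<Rightarrow> 'q state \<Rightarrow> 'q state" where
  "zrot S \<phi> \<psi> = (\<lambda>x. cis (pi * (\<Sum>q\<in>{q \<in> S. x q}. \<phi> q)) * \<psi> x)"

text \<open>U acts on the code space C as the logical gate diag[1, e^{i\<theta>}] in the logical
basis diagonalising the logical Z operator ZL (|0_L> = +1 eigenvector), i.e. as the
operator (1+e^{i\<theta>})/2 I + (1-e^{i\<theta>})/2 ZL restricted to C.\<close>
definition acts_as_logical_phase ::
  "('q state \<Rightarrow> 'q state) \<Rightarrow> ('q state \<Rightarrow> 'q state) \<Rightarrow> real \<Rightarrow> 'q state set \<Rightarrow> bool" where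
  "acts_as_logical_phase U ZL \<theta> C \<longleftrightarrow>
     (\<forall>\<psi>\<in>C. \<forall>x. U \<psi> x = (1 + cis \<theta>) / 2 * \<psi> x + (1 - cis \<theta>) / 2 * ZL \<psi> x)"

text \<open>The group generated by Z-type Pauli operators (up to phase) corresponds to the
GF(2)-span of their supports under symmetric difference.\<close>
inductive_set f2span :: "'a set set \<Rightarrow> 'a set set" for G where
  zero: "{} \<in> f2span G"
| add: "A \<in> G \<Longrightarrow> B \<in> f2span G \<Longrightarrow> (A - B) \<union> (B - A) \<in> f2span G"

section \<open>The hexagonal (6.6.6) color code with triangular boundary\<close>

text \<open>Plaquette centres live on the triangular lattice, point (a,b) = a e1 + b e2 with
e1 = (1,0), e2 = (1/2, sqrt 3/2); the colour of (a,b) is (a-b) mod 3.  Qubits (vertices of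
the hexagonal lattice) are the unit triangles: (a,b,True) is the up-triangle with corners
(a,b),(a+1,b),(a,b+1), (a,b,False) the down-triangle with corners (a+1,b),(a,b+1),(a+1,b+1).
The code region is the big triangle bounded by the three monochromatic lines
a-b = 0, a+2b = 1, 2a+b = (3d+5)/2 (colours 0, 1, 2), for odd d.  Qubits are the unit
triangles inside the closed region; plaquettes are the lattice points strictly inside,
plaquette p being supported on the qubits having p as a corner.  For d = 3,5,7,... this
gives the [[(3d^2+1)/4, 1, d]] triangular colour code (7, 19, 37, ... qubits;
weight-4 boundary and weight-6 bulk plaquettes).\<close>

type_synonym cq = "int \<times> int \<times> bool"

definition tri_verts :: "cq \<Rightarrow> (int \<times> int) set" where
  "tri_verts t = (case t of (a, b, up) \<Rightarrow>
      if up then {(a, b), (a + 1, b), (a, b + 1)} else {(a + 1, b), (a, b + 1), (a + 1, b + 1)})"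

definition in_region :: "nat \<Rightarrow> int \<times> int \<Rightarrow> bool" where
  "in_region d p = (case p of (a, b) \<Rightarrow>
      0 \<le> a - b \<and> 1 \<le> a + 2 * b \<and> 2 * (2 * a + b) \<le> 3 * int d + 5)"

definition in_interior :: "nat \<Rightarrow> int \<times> int \<Rightarrow> bool" where
  "in_interior d p = (case p of (a, b) \<Rightarrow>
      0 < a - b \<and> 1 < a + 2 * b \<and> 2 * (2 * a + b) < 3 * int d + 5)"

definition cc_qubits :: "nat \<Rightarrow> cq set" where
  "cc_qubits d = {t. \<forall>p\<in>tri_verts t. in_region d p}"

definition cc_plaqs :: "nat \<Rightarrow> (int \<times> int) set" where
  "cc_plaqs d = {p. in_interior d p}"

definition plaq :: "nat \<Rightarrow> int \<times> int \<Rightarrow> cq set" where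
  "plaq d p = {t \<in> cc_qubits d. p \<in> tri_verts t}"

text \<open>Edges of the hexagonal lattice inside the code: pairs of qubits (unit triangles)
sharing a lattice edge.\<close>
definition cc_edges :: "nat \<Rightarrow> cq set set" where
  "cc_edges d = {{s, t} | s t. s \<in> cc_qubits d \<and> t \<in> cc_qubits d \<and> s \<noteq> t
                                \<and> card (tri_verts s \<inter> tri_verts t) = 2}"

definition valid_edge_choice :: "nat \<Rightarrow> (int \<times> int \<Rightarrow> cq set) \<Rightarrow> bool" where
  "valid_edge_choice d e \<longleftrightarrow>
     (\<forall>p\<in>cc_plaqs d. e p \<in> cc_edges d \<and> card (e p \<inter> plaq d p) = 1) \<and>
     cc_edges d \<subseteq> f2span (e ` cc_plaqs d \<union> plaq d ` cc_plaqs d)"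

text \<open>Stacked qubits: (l, q) with layer l \<in> {1..d-1} and q a colour-code qubit, plus the
single extra qubit (d, (0,0,True)) forming layer d.\<close>

type_synonym sq = "nat \<times> cq"

definition layer_qubits :: "nat \<Rightarrow> nat \<Rightarrow> cq set" where
  "layer_qubits d l = (if l = d then {(0, 0, True)} else cc_qubits d)"

definition stack_qubits :: "nat \<Rightarrow> sq set" where
  "stack_qubits d = {(l, q). 1 \<le> l \<and> l \<le> d \<and> q \<in> layer_qubits d l}"

definition lift :: "nat \<Rightarrow> cq set \<Rightarrow> sq set" where
  "lift l A = Pair l ` A"

text \<open>X-type generators: G_P^(2k-1) G_P^(2k) and X_L^(2k) X_L^(2k+1), k = 1..(d-1)/2.\<close>
definition stack_XG :: "nat \<Rightarrow> sq set set" where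
  "stack_XG d =
     {lift (2*k - 1) (plaq d p) \<union> lift (2*k) (plaq d p) | k p.
        1 \<le> k \<and> k \<le> (d - 1) div 2 \<and> p \<in> cc_plaqs d}
   \<union> {lift (2*k) (layer_qubits d (2*k)) \<union> lift (2*k + 1) (layer_qubits d (2*k + 1)) | k.
        1 \<le> k \<and> k \<le> (d - 1) div 2}"

text \<open>Z-type generators: H_e^(2k-1) H_e^(2k), H_P^(2k-1), H_P^(2k-1) H_P^(2k) and
Z_L^(2k) Z_L^(2k+1), k = 1..(d-1)/2.\<close>
definition stack_ZG :: "nat \<Rightarrow> (int \<times> int \<Rightarrow> cq set) \<Rightarrow> sq set set" where
  "stack_ZG d e =
     {lift (2*k - 1) (e p) \<union> lift (2*k) (e p) | k p.
        1 \<le> k \<and> k \<le> (d - 1) div 2 \<and> p \<in> cc_plaqs d}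
   \<union> {lift (2*k - 1) (plaq d p) | k p.
        1 \<le> k \<and> k \<le> (d - 1) div 2 \<and> p \<in> cc_plaqs d}
   \<union> {lift (2*k - 1) (plaq d p) \<union> lift (2*k) (plaq d p) | k p.
        1 \<le> k \<and> k \<le> (d - 1) div 2 \<and> p \<in> cc_plaqs d}
   \<union> {lift (2*k) (layer_qubits d (2*k)) \<union> lift (2*k + 1) (layer_qubits d (2*k + 1)) | k.
        1 \<le> k \<and> k \<le> (d - 1) div 2}"

definition stacked_code_space :: "nat \<Rightarrow> (int \<times> int \<Rightarrow> cq set) \<Rightarrow> sq state set" where
  "stacked_code_space d e = code_space (stack_qubits d) (stack_XG d) (stack_ZG d e)"

end

theory Submission
  imports Defs
begin


lemma inQ_up: "((a,b,True) \<in> cc_qubits d) \<longleftrightarrow> a - b \<ge> 1 \<and> a + 2*b \<ge> 1 \<and> 2*(2*a+b) \<le> 3*int d+1"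
  unfolding cc_qubits_def tri_verts_def in_region_def by auto

lemma inQ_dn: "((a,b,False) \<in> cc_qubits d) \<longleftrightarrow> a - b \<ge> 1 \<and> a + 2*b \<ge> 0 \<and> 2*(2*a+b) \<le> 3*int d - 1"
  unfolding cc_qubits_def tri_verts_def in_region_def by auto

lemma inP: "((a,b) \<in> cc_plaqs d) \<longleftrightarrow> a - b \<ge> 1 \<and> a + 2*b \<ge> 2 \<and> 2*(2*a+b) < 3*int d+5"
  unfolding cc_plaqs_def in_interior_def by auto

definition six :: "int \<times> int \<Rightarrow> cq set" where
  "six p = (case p of (a,b) \<Rightarrow> {(a,b,True),(a-1,b,True),(a,b-1,True),(a-1,b,False),(a,b-1,False),(a-1,b-1,False)})"

lemma vert_six: "p \<in> tri_verts t \<longleftrightarrow> t \<in> six p"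
  by (cases p; cases t; auto simp: tri_verts_def six_def)

lemma plaq_six: "plaq d p = {t \<in> six p. t \<in> cc_qubits d}"
  unfolding plaq_def using vert_six by auto

definition sg :: "cq \<Rightarrow> int" where "sg t = (if snd (snd t) then 1 else -1)"
definition Qs :: "cq set \<Rightarrow> int" where "Qs Z = (\<Sum>t\<in>Z. sg t)"

lemma finite_six[simp]: "finite (six p)" by (cases p) (simp add: six_def)

lemma sum_plaq: "(\<Sum>t\<in>plaq d p. f t) = (\<Sum>t\<in>six p. if t \<in> cc_qubits d then f t else 0)"
  unfolding plaq_six by (simp add: sum.inter_filter)

lemma sum_six: "(\<Sum>t\<in>six (a,b). f t) = f (a,b,True) + f (a-1,b,True) + f (a,b-1,True) + f (a-1,b,False) + f (a,b-1,False) + f (a-1,b-1,False)"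
  by (simp add: six_def add.assoc)

lemma odd_int: assumes "odd d" shows "\<exists>m. int d = 2*m+1 \<and> m \<ge> 0"
proof -
  obtain k where "d = 2*k+1" using assms oddE by blast
  then show ?thesis by (intro exI[of _ "int k"]) simp
qed

lemma plaq_mem:
  assumes "odd d" "(a,b) \<in> cc_plaqs d"
  defines "E1 \<equiv> 4*a+2*b \<le> 3*int d+1" and "E2 \<equiv> a - b \<ge> 2" and "E3 \<equiv> a + 2*b \<ge> 3"
  shows "((a,b,True) \<in> cc_qubits d \<longleftrightarrow> E1) \<and> ((a,b-1,False) \<in> cc_qubits d \<longleftrightarrow> E1)
       \<and> ((a-1,b,True) \<in> cc_qubits d \<longleftrightarrow> E2) \<and> ((a-1,b,False) \<in> cc_qubits d \<longleftrightarrow> E2)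
       \<and> ((a,b-1,True) \<in> cc_qubits d \<longleftrightarrow> E3) \<and> ((a-1,b-1,False) \<in> cc_qubits d \<longleftrightarrow> E3)"
proof -
  obtain m where m: "int d = 2*m+1" using odd_int[OF assms(1)] by blast
  have p: "a - b \<ge> 1" "a + 2*b \<ge> 2" "2*(2*a+b) < 3*int d+5" using assms(2) by (auto simp: inP)
  show ?thesis unfolding inQ_up inQ_dn E1_def E2_def E3_def using p m by (intro conjI; simp only: E1_def; arith)
qed

lemma plaq_Qs: assumes "odd d" "(a,b) \<in> cc_plaqs d" shows "Qs (plaq d (a,b)) = 0"
  using plaq_mem[OF assms] unfolding Qs_def sum_plaq sum_six by (simp add: sg_def)

lemma plaq_card: assumes "odd d" "(a,b) \<in> cc_plaqs d" shows "even (card (plaq d (a,b)))"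
proof -
  have "int (card (plaq d (a,b))) = (\<Sum>t\<in>plaq d (a,b). 1)" by simp
  also have "\<dots> = (\<Sum>t\<in>six (a,b). if t \<in> cc_qubits d then 1 else 0)" by (rule sum_plaq)
  also have "\<dots> = 2*((if 4*a+2*b \<le> 3*int d+1 then 1 else 0) + (if a - b \<ge> 2 then 1 else 0) + (if a + 2*b \<ge> 3 then 1 else 0))"
    using plaq_mem[OF assms] unfolding sum_six by simp
  finally show ?thesis by presburger
qed


lemma six_Q: assumes "odd d" "p \<in> cc_plaqs d" "q \<in> cc_plaqs d" "t \<in> six p" "t \<in> six q" "p \<noteq> q"
  shows "t \<in> cc_qubits d"
proof -
  obtain m where m: "int d = 2*m+1" using odd_int[OF assms(1)] by blast
  obtain a b where pab: "p = (a,b)" by (cases p)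
  obtain c e where qce: "q = (c,e)" by (cases q)
  show ?thesis using assms(2-6) m unfolding pab qce six_def
    by (auto simp: inQ_up inQ_dn inP; presburger)
qed

lemma plaq_inter: assumes "odd d" "p \<in> cc_plaqs d" "q \<in> cc_plaqs d"
  shows "even (card (plaq d p \<inter> plaq d q))"
proof -
  obtain a b where pab: "p = (a,b)" by (cases p)
  obtain c e where qce: "q = (c,e)" by (cases q)
  consider "p = q" | "p \<noteq> q" by blast
  then show ?thesis
  proof cases
    case 1 then show ?thesis using plaq_card[OF assms(1), of a b] assms(2) pab by simp
  next
    case 2
  have "plaq d p \<inter> plaq d q = six p \<inter> six q"
    using six_Q[OF assms _ _ 2] unfolding plaq_six by auto
  moreover have "even (card (six (a,b) \<inter> six (c,e)))"
  proof -
    have "int (card (six (a,b) \<inter> six (c,e))) = (\<Sum>t\<in>six (a,b). if t \<in> six (c,e) then 1 else 0)"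
      by (simp add: sum.inter_filter[symmetric] Int_def)
    also have "\<dots> = (if (c,e) = (a,b) then 6 else if (c,e) \<in> {(a+1,b),(a,b+1),(a-1,b+1),(a-1,b),(a,b-1),(a+1,b-1)} then 2 else 0)"
      unfolding sum_six by (auto simp: six_def)
    finally show ?thesis by (simp split: if_splits; presburger)
  qed
  ultimately show ?thesis unfolding pab qce by simp
qed
qed


lemma card_inter_sum: assumes "finite B" shows "int (card (A \<inter> B)) = (\<Sum>t\<in>B. if t \<in> A then 1 else 0)"
proof -
  have "A \<inter> B = {t\<in>B. t \<in> A}" by auto
  then show ?thesis using assms by (simp add: sum.inter_filter[symmetric])
qed

lemma finite_plaq[simp]: "finite (plaq d p)" unfolding plaq_six by simp

definition inx0 :: "nat \<Rightarrow> cq \<Rightarrow> bool" where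
  "inx0 d t = (case t of (a,b,u) \<Rightarrow> if u then 4*a+2*b = 3*int d+1 else 4*a+2*b = 3*int d - 1)"

definition x0 :: "nat \<Rightarrow> cq set" where "x0 d = {t \<in> cc_qubits d. inx0 d t}"

lemma x0_plaq: assumes "odd d" "p \<in> cc_plaqs d" shows "even (card (x0 d \<inter> plaq d p))"
proof -
  obtain a b where pab: "p = (a,b)" by (cases p)
  obtain m where m: "int d = 2*m+1" using odd_int[OF assms(1)] by blast
  have pp: "a - b \<ge> 1" "a + 2*b \<ge> 2" "2*(2*a+b) < 3*int d+5" using assms(2) by (auto simp: inP pab)
  have "int (card (x0 d \<inter> plaq d p)) = (\<Sum>t\<in>plaq d p. if t \<in> x0 d then 1 else 0)"
    by (rule card_inter_sum) simp
  also have "\<dots> = (\<Sum>t\<in>plaq d p. if inx0 d t then 1 else 0)"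
    by (rule sum.cong) (auto simp: x0_def plaq_def)
  also have "\<dots> = (\<Sum>t\<in>six (a,b). if t \<in> cc_qubits d \<and> inx0 d t then 1 else 0)"
    unfolding pab sum_plaq by (rule sum.cong) auto
  also have "\<dots> = 2 * (if 4*a+2*b = 3*int d + 1 then 1 else 0) + 2 * (if 4*a+2*b = 3*int d + 3 \<and> 3 \<le> a + 2*b then 1 else 0)"
  proof -
    note pm = plaq_mem[OF assms(1) assms(2)[unfolded pab]]
    have k: "4*a+2*b = 3*int d+3 \<Longrightarrow> (a - b \<ge> 2 \<longleftrightarrow> a + 2*b \<ge> 3)" using m pp by presburger
    show ?thesis unfolding sum_six using pm pp k by (simp add: inx0_def)
  qed
  finally show ?thesis by presburger
qed


lemma x0_param: assumes m: "int d = 2*m+1"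
  shows "x0 d = (\<lambda>j. (m+1+j, m-2*j, True)) ` {0..m} \<union> (\<lambda>j. (m+1+j, m-1-2*j, False)) ` {0..m-1}"
    (is "_ = ?U \<union> ?D")
proof
  show "x0 d \<subseteq> ?U \<union> ?D"
  proof
    fix t assume t: "t \<in> x0 d"
    obtain a b u where tt: "t = (a,b,u)" by (cases t)
    show "t \<in> ?U \<union> ?D"
    proof (cases u)
      case True
      with t tt m have h: "a - b \<ge> 1" "a + 2*b \<ge> 1" "4*a+2*b = 3*int d+1"
        by (auto simp: x0_def inx0_def inQ_up)
      have "t = (m+1+(a-m-1), m-2*(a-m-1), True)" using h m tt True by simp
      moreover have "a-m-1 \<in> {0..m}" using h m by simp
      ultimately show ?thesis by blast
    next
      case False
      with t tt m have h: "a - b \<ge> 1" "a + 2*b \<ge> 0" "4*a+2*b = 3*int d - 1"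
        by (auto simp: x0_def inx0_def inQ_dn)
      have "t = (m+1+(a-m-1), m-1-2*(a-m-1), False)" using h m tt False by simp
      moreover have "a-m-1 \<in> {0..m-1}" using h m by simp
      ultimately show ?thesis by blast
    qed
  qed
  show "?U \<union> ?D \<subseteq> x0 d" using m by (auto simp: x0_def inx0_def inQ_up inQ_dn)
qed

lemma x0_props: assumes "odd d" shows "Qs (x0 d) = 1" "odd (card (x0 d))" "x0 d \<subseteq> cc_qubits d"
proof -
  obtain m where m: "int d = 2*m+1" "m \<ge> 0" using odd_int[OF assms] by blast
  let ?f = "\<lambda>j. (m+1+j, m-2*j, True)" and ?g = "\<lambda>j. (m+1+j, m-1-2*j, False)"
  have inj1: "inj_on ?f {0..m}" by (auto simp: inj_on_def)
  have inj2: "inj_on ?g {0..m-1}" by (auto simp: inj_on_def)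
  have dis: "?f ` {0..m} \<inter> ?g ` {0..m-1} = {}" by auto
  have "Qs (x0 d) = Qs (?f ` {0..m}) + Qs (?g ` {0..m-1})"
    unfolding x0_param[OF m(1)] Qs_def by (rule sum.union_disjoint) (use dis in auto)
  also have "\<dots> = (\<Sum>j\<in>{0..m}. 1) + (\<Sum>j\<in>{0..m-1}. -1)"
    unfolding Qs_def by (simp add: sum.reindex[OF inj1] sum.reindex[OF inj2] sg_def)
  also have "\<dots> = 1" using m(2) by simp
  finally show "Qs (x0 d) = 1" .
  have "card (x0 d) = card (?f ` {0..m}) + card (?g ` {0..m-1})"
    unfolding x0_param[OF m(1)] by (rule card_Un_disjoint) (use dis in auto)
  also have "\<dots> = nat (m+1) + nat m" by (simp add: card_image[OF inj1] card_image[OF inj2])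
  also have "\<dots> = 2 * nat m + 1" using m(2) by (simp add: nat_add_distrib)
  finally show "odd (card (x0 d))" by simp
  show "x0 d \<subseteq> cc_qubits d" unfolding x0_def by auto
qed


lemma finite_Q[simp]: "finite (cc_qubits d)"
proof -
  let ?B = "{-(3*int d+3)..3*int d+3}"
  have "cc_qubits d \<subseteq> ?B \<times> ?B \<times> UNIV"
  proof
    fix t assume t: "t \<in> cc_qubits d"
    obtain a b u where tt: "t = (a,b,u)" by (cases t)
    show "t \<in> ?B \<times> ?B \<times> UNIV" using t unfolding tt by (cases u) (auto simp: inQ_up inQ_dn)
  qed
  moreover have "finite (?B \<times> ?B \<times> (UNIV :: bool set))" by simp
  ultimately show ?thesis by (rule finite_subset)
qed

definition piv :: "nat \<Rightarrow> cq \<Rightarrow> bool" where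
  "piv d t = (case t of (a,b,u) \<Rightarrow> if u then 4*a+2*b \<le> 3*int d - 1 else a - b = 1 \<and> 4*a+2*b \<le> 3*int d - 3)"
definition PivS :: "nat \<Rightarrow> cq set" where "PivS d = {t \<in> cc_qubits d. piv d t}"
definition mc :: "cq \<Rightarrow> int \<times> int" where "mc t = (case t of (a,b,u) \<Rightarrow> if u then (a+1,b) else (a+1,b+1))"
definition r1 :: "nat \<Rightarrow> cq \<Rightarrow> nat" where
  "r1 d t = (case t of (a,b,u) \<Rightarrow> nat (if u then 3*int d+1-4*a-2*b else 3*int d - 1 - 4*a-2*b))"

lemma stageA_up: assumes "int d = 2*m+1" "(a,b,True) \<in> PivS d"
  shows "mc (a,b,True) \<in> cc_plaqs d \<and> (a,b,True) \<in> plaq d (mc (a,b,True)) \<and> (\<forall>s\<in>plaq d (mc (a,b,True)). s \<in> PivS d \<longrightarrow> s \<noteq> (a,b,True) \<longrightarrow> r1 d s < r1 d (a,b,True))"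
proof -
  have h: "a - b \<ge> 1" "a + 2*b \<ge> 1" "4*a+2*b \<le> 3*int d - 1" using assms(2) by (auto simp: PivS_def piv_def inQ_up)
  show ?thesis using h assms(1)
    by (auto simp: mc_def inP plaq_six six_def inQ_up inQ_dn PivS_def piv_def r1_def)
qed

lemma stageA_dn: assumes "int d = 2*m+1" "(a,b,False) \<in> PivS d"
  shows "mc (a,b,False) \<in> cc_plaqs d \<and> (a,b,False) \<in> plaq d (mc (a,b,False)) \<and> (\<forall>s\<in>plaq d (mc (a,b,False)). s \<in> PivS d \<longrightarrow> s \<noteq> (a,b,False) \<longrightarrow> r1 d s < r1 d (a,b,False))"
proof -
  have h: "a - b = 1" "a + 2*b \<ge> 0" "4*a+2*b \<le> 3*int d - 3" using assms(2) by (auto simp: PivS_def piv_def inQ_dn)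
  show ?thesis using h assms(1)
    by (auto simp: mc_def inP plaq_six six_def inQ_up inQ_dn PivS_def piv_def r1_def)
qed

lemma stageA: assumes "odd d" "t \<in> PivS d"
  shows "mc t \<in> cc_plaqs d \<and> t \<in> plaq d (mc t) \<and> (\<forall>s\<in>plaq d (mc t). s \<in> PivS d \<longrightarrow> s \<noteq> t \<longrightarrow> r1 d s < r1 d t)"
proof -
  obtain m where m: "int d = 2*m+1" using odd_int[OF assms(1)] by blast
  obtain a b u where tt: "t = (a,b,u)" by (cases t)
  show ?thesis using stageA_up[OF m, of a b] stageA_dn[OF m, of a b] assms(2) tt by (cases u) auto
qed


definition R :: "nat \<Rightarrow> cq set" where "R d = cc_qubits d - PivS d"
definition tf :: "nat \<Rightarrow> cq" where "tf d = ((int d + 1) div 2, (int d - 1) div 2, True)"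
definition r2 :: "nat \<Rightarrow> cq \<Rightarrow> nat" where
  "r2 d t = (case t of (a,b,u) \<Rightarrow> nat (if inx0 d (a,b,u) then 6*int d + 6 - b else 2*a+b))"

lemma tf_m: "int d = 2*m+1 \<Longrightarrow> tf d = (m+1, m, True)"
  unfolding tf_def by simp

lemma stageB_up: assumes m: "int d = 2*m+1" and t: "(a,b,True) \<in> R d" "(a,b,True) \<noteq> tf d"
  shows "(a,b+1) \<in> cc_plaqs d \<and> (a,b,True) \<in> plaq d (a,b+1) \<and> (\<forall>s\<in>plaq d (a,b+1). s \<in> R d \<longrightarrow> s \<noteq> (a,b,True) \<longrightarrow> r2 d s < r2 d (a,b,True))"
proof -
  have h0: "a - b \<ge> 1" "a + 2*b \<ge> 1" "4*a+2*b \<le> 3*int d + 1" "\<not> 4*a+2*b \<le> 3*int d - 1"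
    using t(1) by (auto simp: R_def PivS_def piv_def inQ_up)
  have h1: "4*a+2*b = 3*int d+1" using h0 m by presburger
  have h2: "a - b \<ge> 2" using h1 h0 m t(2) tf_m[OF m] by auto
  show ?thesis using h0 h1 h2 m
    by (auto simp: inP plaq_six six_def inQ_up inQ_dn R_def PivS_def piv_def r2_def inx0_def)
qed

lemma stageB_dn: assumes m: "int d = 2*m+1" and t: "(a,b,False) \<in> R d"
  shows "(a,b+1) \<in> cc_plaqs d \<and> (a,b,False) \<in> plaq d (a,b+1) \<and> (\<forall>s\<in>plaq d (a,b+1). s \<in> R d \<longrightarrow> s \<noteq> (a,b,False) \<longrightarrow> r2 d s < r2 d (a,b,False))"
proof -
  have h0: "a - b \<ge> 1" "a + 2*b \<ge> 0" "4*a+2*b \<le> 3*int d - 1" "\<not> (a - b = 1 \<and> 4*a+2*b \<le> 3*int d - 3)"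
    using t(1) by (auto simp: R_def PivS_def piv_def inQ_dn)
  have h2: "a - b \<ge> 2" using h0 m by presburger
  have h3: "4*a+2*b \<noteq> 6*m+1 \<and> 4*a+2*b \<noteq> 6*m-1 \<and> 4*a+2*b \<noteq> 6*m+3" by presburger
  show ?thesis using h0 h2 h3 m
    by (auto simp: inP plaq_six six_def inQ_up inQ_dn R_def PivS_def piv_def r2_def inx0_def)
qed


definition nb :: "cq \<Rightarrow> cq" where
  "nb t = (case t of (a,b,u) \<Rightarrow> if u then (if a - b \<ge> 2 then (a-1,b,False) else (a,b-1,False))
                                   else (if a + 2*b \<ge> 1 then (a,b,True) else (a,b+1,True)))"
definition r3 :: "cq \<Rightarrow> nat" where
  "r3 t = (case t of (a,b,u) \<Rightarrow> nat (2*\<bar>b\<bar> + 2*a + (if u then 0 else 1)))"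

lemma edge_mem: assumes "s \<in> cc_qubits d" "t \<in> cc_qubits d" "s \<noteq> t" "tri_verts s \<inter> tri_verts t = {p,q}" "p \<noteq> q"
  shows "{s,t} \<in> cc_edges d"
proof -
  have "card (tri_verts s \<inter> tri_verts t) = 2" using assms(4,5) by simp
  then show ?thesis using assms(1-3) unfolding cc_edges_def by blast
qed

lemma conn_step: assumes "t \<in> cc_qubits d" "t \<noteq> (1,0,True)"
  shows "nb t \<in> cc_qubits d \<and> {t, nb t} \<in> cc_edges d \<and> r3 (nb t) < r3 t"
proof -
  obtain a b u where tt: "t = (a,b,u)" by (cases t)
  show ?thesis
  proof (cases u)
    case True
    have h: "a - b \<ge> 1" "a + 2*b \<ge> 1" "4*a+2*b \<le> 3*int d+1" using assms(1) tt True by (auto simp: inQ_up)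
    show ?thesis
    proof (cases "a - b \<ge> 2")
      case c: True
      have e: "tri_verts (a,b,True) \<inter> tri_verts (a-1,b,False) = {(a,b),(a,b+1)}" by (auto simp: tri_verts_def)
      show ?thesis unfolding tt using True c h e edge_mem[of "(a,b,True)" d "(a-1,b,False)" "(a,b)" "(a,b+1)"]
        by (auto simp: nb_def r3_def inQ_up inQ_dn)
    next
      case c: False
      have b: "b \<ge> 1" using c h assms(2) tt True by auto
      have e: "tri_verts (a,b,True) \<inter> tri_verts (a,b-1,False) = {(a,b),(a+1,b)}" by (auto simp: tri_verts_def)
      show ?thesis unfolding tt using True c h b e edge_mem[of "(a,b,True)" d "(a,b-1,False)" "(a,b)" "(a+1,b)"]
        by (auto simp: nb_def r3_def inQ_up inQ_dn)
    qed
  next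
    case False
    have h: "a - b \<ge> 1" "a + 2*b \<ge> 0" "4*a+2*b \<le> 3*int d - 1" using assms(1) tt False by (auto simp: inQ_dn)
    show ?thesis
    proof (cases "a + 2*b \<ge> 1")
      case c: True
      have e: "tri_verts (a,b,False) \<inter> tri_verts (a,b,True) = {(a+1,b),(a,b+1)}" by (auto simp: tri_verts_def)
      show ?thesis unfolding tt using False c h e edge_mem[of "(a,b,False)" d "(a,b,True)" "(a+1,b)" "(a,b+1)"]
        by (auto simp: nb_def r3_def inQ_up inQ_dn)
    next
      case c: False
      have b: "b \<le> -1" using c h by auto
      have e: "tri_verts (a,b,False) \<inter> tri_verts (a,b+1,True) = {(a,b+1),(a+1,b+1)}" by (auto simp: tri_verts_def)
      show ?thesis unfolding tt using False c h b e edge_mem[of "(a,b,False)" d "(a,b+1,True)" "(a,b+1)" "(a+1,b+1)"]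
        by (auto simp: nb_def r3_def inQ_up inQ_dn)
    qed
  qed
qed


section \<open>Abstract parity algebra\<close>

definition sdiff :: "'a set \<Rightarrow> 'a set \<Rightarrow> 'a set" where "sdiff A B = (A - B) \<union> (B - A)"

lemma sum_sdiff: fixes f :: "'a \<Rightarrow> int" assumes "finite A" "finite B"
  shows "sum f (sdiff A B) = sum f A + sum f B - 2 * sum f (A \<inter> B)"
proof -
  have d1: "sum f (sdiff A B) = sum f (A - B) + sum f (B - A)"
    unfolding sdiff_def by (rule sum.union_disjoint) (use assms in auto)
  have "sum f A = sum f (A - B) + sum f (A \<inter> B)"
    using sum.Int_Diff[OF assms(1), of f B] by simp
  moreover have "sum f B = sum f (B - A) + sum f (A \<inter> B)"
    using sum.Int_Diff[OF assms(2), of f A] by (simp add: Int_commute)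
  ultimately show ?thesis using d1 by simp
qed

lemma card_sdiff: assumes "finite A" "finite B"
  shows "int (card (sdiff A B)) = int (card A) + int (card B) - 2 * int (card (A \<inter> B))"
  using sum_sdiff[OF assms, of "\<lambda>_. 1"] by simp

lemma sdiff_Int: "sdiff A B \<inter> C = sdiff (A \<inter> C) (B \<inter> C)" unfolding sdiff_def by auto

lemma even_card_sdiff: assumes "finite A" "finite B" "even (card (A \<inter> C))" "even (card (B \<inter> C))"
  shows "even (card (sdiff A B \<inter> C))"
proof -
  have "int (card (sdiff A B \<inter> C)) = int (card (A \<inter> C)) + int (card (B \<inter> C)) - 2 * int (card (A \<inter> C \<inter> (B \<inter> C)))"
    unfolding sdiff_Int by (rule card_sdiff) (use assms in auto)
  then show ?thesis using assms(3,4) by presburger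
qed

definition Kset :: "nat \<Rightarrow> cq set \<Rightarrow> bool" where
  "Kset d Z \<longleftrightarrow> Z \<subseteq> cc_qubits d \<and> (\<forall>p\<in>cc_plaqs d. even (card (Z \<inter> plaq d p)))"

lemma Kset_finite: "Kset d Z \<Longrightarrow> finite Z" unfolding Kset_def using finite_subset finite_Q by blast

lemma Kset_sdiff: assumes "Kset d A" "Kset d B" shows "Kset d (sdiff A B)"
proof -
  have "sdiff A B \<subseteq> cc_qubits d" using assms unfolding Kset_def sdiff_def by auto
  moreover have "\<forall>p\<in>cc_plaqs d. even (card (sdiff A B \<inter> plaq d p))"
    using assms Kset_finite[OF assms(1)] Kset_finite[OF assms(2)] even_card_sdiff unfolding Kset_def by blast
  ultimately show ?thesis unfolding Kset_def by blast
qed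


lemma Kset_plaq: assumes "odd d" "p \<in> cc_plaqs d" shows "Kset d (plaq d p)"
  unfolding Kset_def using plaq_inter[OF assms(1) assms(2)] by (auto simp: plaq_def)

lemma Kset_x0: assumes "odd d" shows "Kset d (x0 d)"
  unfolding Kset_def using x0_plaq[OF assms] x0_props(3)[OF assms] by auto

lemma Kset_Q: assumes "odd d" shows "Kset d (cc_qubits d)"
proof -
  have "cc_qubits d \<inter> plaq d p = plaq d p" for p by (auto simp: plaq_def)
  then show ?thesis unfolding Kset_def using plaq_card[OF assms] by auto
qed

lemma Qs_parity: assumes "finite S" shows "Qs S mod 2 = int (card S) mod 2"
proof -
  have "Qs S = (\<Sum>t\<in>S. 1 - 2 * (if snd (snd t) then 0 else 1))"
    unfolding Qs_def by (rule sum.cong) (auto simp: sg_def)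
  also have "\<dots> = int (card S) - 2 * (\<Sum>t\<in>S. (if snd (snd t) then 0 else 1))"
    by (simp add: sum_subtractf sum_distrib_left)
  finally show ?thesis by presburger
qed

definition inv :: "nat \<Rightarrow> cq set \<Rightarrow> int \<times> int \<times> int" where
  "inv d Z = (Qs Z mod 4, int (card Z) mod 2, int (card (Z \<inter> x0 d)) mod 2)"

lemma inv_step: assumes "odd d" "Kset d Z" "p \<in> cc_plaqs d"
  shows "inv d (sdiff Z (plaq d p)) = inv d Z"
proof -
  let ?P = "plaq d p"
  have fZ: "finite Z" using Kset_finite[OF assms(2)] .
  have fP: "finite ?P" by simp
  obtain a b where pab: "p = (a,b)" by (cases p)
  have QP: "Qs ?P = 0" using plaq_Qs[OF assms(1)] assms(3) pab by simp
  have cP: "even (card ?P)" using plaq_card[OF assms(1)] assms(3) pab by simp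
  have cZP: "even (card (Z \<inter> ?P))" using assms(2,3) unfolding Kset_def by blast
  have cPx: "even (card (?P \<inter> x0 d))" using x0_plaq[OF assms(1,3)] by (simp add: Int_commute)
  have q1: "Qs (sdiff Z ?P) = Qs Z + Qs ?P - 2 * Qs (Z \<inter> ?P)"
    unfolding Qs_def by (rule sum_sdiff[OF fZ fP])
  have q2: "Qs (Z \<inter> ?P) mod 2 = int (card (Z \<inter> ?P)) mod 2" by (rule Qs_parity) (use fZ in simp)
  have c1: "int (card (sdiff Z ?P)) = int (card Z) + int (card ?P) - 2 * int (card (Z \<inter> ?P))"
    by (rule card_sdiff[OF fZ fP])
  have c2: "int (card (sdiff Z ?P \<inter> x0 d)) = int (card (Z \<inter> x0 d)) + int (card (?P \<inter> x0 d)) - 2 * int (card (Z \<inter> x0 d \<inter> (?P \<inter> x0 d)))"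
    unfolding sdiff_Int by (rule card_sdiff) (use fZ in auto)
  have e1: "Qs (sdiff Z ?P) mod 4 = Qs Z mod 4" using q1 q2 QP cZP by presburger
  have e2: "int (card (sdiff Z ?P)) mod 2 = int (card Z) mod 2" using c1 cP by presburger
  have e3: "int (card (sdiff Z ?P \<inter> x0 d)) mod 2 = int (card (Z \<inter> x0 d)) mod 2" using c2 cPx by presburger
  show ?thesis unfolding inv_def using e1 e2 e3 by simp
qed



lemma reduce_aux:
  assumes od: "odd d"
  shows "\<forall>Z. Kset d Z \<and> (\<forall>t\<in>Z \<inter> PivS d. r1 d t < r) \<longrightarrow> (\<exists>Z'. Kset d Z' \<and> Z' \<inter> PivS d = {} \<and> inv d Z' = inv d Z)"
proof (induction r)
  case 0
  then show ?case by auto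
next
  case (Suc r)
  have inner: "\<forall>Z. Kset d Z \<and> (\<forall>t\<in>Z \<inter> PivS d. r1 d t \<le> r) \<and> card {t\<in>Z \<inter> PivS d. r1 d t = r} = n
          \<longrightarrow> (\<exists>Z'. Kset d Z' \<and> Z' \<inter> PivS d = {} \<and> inv d Z' = inv d Z)" for n
  proof (induction n)
    case 0
    show ?case
    proof (intro allI impI)
      fix Z assume h: "Kset d Z \<and> (\<forall>t\<in>Z \<inter> PivS d. r1 d t \<le> r) \<and> card {t\<in>Z \<inter> PivS d. r1 d t = r} = 0"
      have "finite {t\<in>Z \<inter> PivS d. r1 d t = r}" using Kset_finite h by auto
      then have "{t\<in>Z \<inter> PivS d. r1 d t = r} = {}" using h by simp
      then have "\<forall>t\<in>Z \<inter> PivS d. r1 d t < r"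
      proof (intro ballI)
        fix t assume e: "{t\<in>Z \<inter> PivS d. r1 d t = r} = {}" and t: "t \<in> Z \<inter> PivS d"
        then have "r1 d t \<noteq> r" by blast
        moreover have "r1 d t \<le> r" using h t by blast
        ultimately show "r1 d t < r" by simp
      qed
      then show "\<exists>Z'. Kset d Z' \<and> Z' \<inter> PivS d = {} \<and> inv d Z' = inv d Z" using Suc.IH h by blast
    qed
  next
    case (Suc n)
    show ?case
    proof (intro allI impI)
      fix Z assume h: "Kset d Z \<and> (\<forall>t\<in>Z \<inter> PivS d. r1 d t \<le> r) \<and> card {t\<in>Z \<inter> PivS d. r1 d t = r} = Suc n"
      let ?A = "{t\<in>Z \<inter> PivS d. r1 d t = r}"
      have fA: "finite ?A" using Kset_finite h by auto
      have "?A \<noteq> {}" proof assume "?A = {}" then have "card ?A = 0" by (simp only: card.empty) then show False using h by simp qed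
      then obtain t where t: "t \<in> ?A" by blast
      have tP: "t \<in> PivS d" using t by auto
      note sA = stageA[OF od tP]
      let ?P = "plaq d (mc t)"
      define Z1 where "Z1 = sdiff Z ?P"
      have K1: "Kset d Z1" unfolding Z1_def by (rule Kset_sdiff) (use h Kset_plaq[OF od] sA in auto)
      have I1: "inv d Z1 = inv d Z" unfolding Z1_def by (rule inv_step[OF od]) (use h sA in auto)
      have low: "\<forall>s\<in>?P. s \<in> PivS d \<longrightarrow> s \<noteq> t \<longrightarrow> r1 d s < r" using sA t by auto
      have r1': "\<forall>s\<in>Z1 \<inter> PivS d. r1 d s \<le> r"
      proof
        fix s assume s: "s \<in> Z1 \<inter> PivS d"
        show "r1 d s \<le> r"
        proof (cases "s \<in> Z")
          case True then show ?thesis using h s by auto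
        next
          case False
          then have "s \<in> ?P" "s \<noteq> t" using s t unfolding Z1_def sdiff_def by auto
          then have "r1 d s < r" using low s by blast
          then show ?thesis by simp
        qed
      qed
      have Aeq: "{s\<in>Z1 \<inter> PivS d. r1 d s = r} = ?A - {t}"
      proof
        show "{s\<in>Z1 \<inter> PivS d. r1 d s = r} \<subseteq> ?A - {t}"
        proof
          fix s assume s: "s \<in> {s\<in>Z1 \<inter> PivS d. r1 d s = r}"
          have "s \<notin> ?P - Z"
          proof
            assume "s \<in> ?P - Z"
            then show False using low s t by auto
          qed
          then have "s \<in> Z" "s \<notin> ?P" using s unfolding Z1_def sdiff_def by auto
          then show "s \<in> ?A - {t}" using s sA by auto
        qed
        show "?A - {t} \<subseteq> {s\<in>Z1 \<inter> PivS d. r1 d s = r}"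
        proof
          fix s assume s: "s \<in> ?A - {t}"
          have "s \<notin> ?P"
          proof
            assume "s \<in> ?P" then have "r1 d s < r" using low s by blast
            then show False using s by simp
          qed
          then show "s \<in> {s\<in>Z1 \<inter> PivS d. r1 d s = r}" using s unfolding Z1_def sdiff_def by auto
        qed
      qed
      have "card {s\<in>Z1 \<inter> PivS d. r1 d s = r} = n" unfolding Aeq using h t fA by simp
      then obtain Z' where "Kset d Z' \<and> Z' \<inter> PivS d = {} \<and> inv d Z' = inv d Z1"
        using Suc.IH K1 r1' by blast
      then show "\<exists>Z'. Kset d Z' \<and> Z' \<inter> PivS d = {} \<and> inv d Z' = inv d Z" using I1 by auto
    qed
  qed
  show ?case
  proof (intro allI impI)
    fix Z assume h: "Kset d Z \<and> (\<forall>t\<in>Z \<inter> PivS d. r1 d t < Suc r)"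
    then show "\<exists>Z'. Kset d Z' \<and> Z' \<inter> PivS d = {} \<and> inv d Z' = inv d Z"
    proof -
      have "\<forall>t\<in>Z \<inter> PivS d. r1 d t \<le> r" using h by (simp add: less_Suc_eq_le)
      then show ?thesis using inner[of "card {t\<in>Z \<inter> PivS d. r1 d t = r}"] h by blast
    qed
  qed
qed

lemma reduce: assumes "odd d" "Kset d Z" shows "\<exists>Z'. Kset d Z' \<and> Z' \<inter> PivS d = {} \<and> inv d Z' = inv d Z"
proof -
  have "finite (Z \<inter> PivS d)" using Kset_finite[OF assms(2)] by simp
  then obtain r where "\<forall>t\<in>Z \<inter> PivS d. r1 d t < r"
    by (metis finite_nat_set_iff_bounded finite_imageI imageI)
  then show ?thesis using reduce_aux[OF assms(1), of r] assms(2) by blast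
qed


lemma stageB: assumes "odd d" "t \<in> R d" "t \<noteq> tf d"
  shows "\<exists>p\<in>cc_plaqs d. t \<in> plaq d p \<and> (\<forall>s\<in>plaq d p. s \<in> R d \<longrightarrow> s \<noteq> t \<longrightarrow> r2 d s < r2 d t)"
proof -
  obtain m where m: "int d = 2*m+1" using odd_int[OF assms(1)] by blast
  obtain a b u where tt: "t = (a,b,u)" by (cases t)
  show ?thesis using stageB_up[OF m, of a b] stageB_dn[OF m, of a b] assms(2,3) tt by (cases u) auto
qed

lemma stage2: assumes od: "odd d" and K: "Kset d z" and zP: "z \<inter> PivS d = {}" and tfz: "tf d \<notin> z"
  shows "z = {}"
proof -
  have zR: "z \<subseteq> R d" using K zP unfolding Kset_def R_def by auto
  have main: "\<forall>t. r2 d t = n \<longrightarrow> t \<in> R d \<longrightarrow> t \<notin> z" for n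
  proof (induction n rule: less_induct)
    case (less n)
    show ?case
    proof (intro allI impI)
      fix t assume tn: "r2 d t = n" and tR: "t \<in> R d"
      show "t \<notin> z"
      proof (cases "t = tf d")
        case True then show ?thesis using tfz by simp
      next
        case False
        obtain p where p: "p \<in> cc_plaqs d" "t \<in> plaq d p" "\<forall>s\<in>plaq d p. s \<in> R d \<longrightarrow> s \<noteq> t \<longrightarrow> r2 d s < r2 d t"
          using stageB[OF od tR False] by blast
        have sub: "z \<inter> plaq d p \<subseteq> {t}"
        proof
          fix s assume s: "s \<in> z \<inter> plaq d p"
          show "s \<in> {t}"
          proof (rule ccontr)
            assume "s \<notin> {t}"
            then have "r2 d s < n" using p(3) s zR tn by auto
            then show False using less.IH s zR by blast
          qed
        qed
        have ev: "even (card (z \<inter> plaq d p))" using K p(1) unfolding Kset_def by blast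
        show "t \<notin> z"
        proof
          assume "t \<in> z"
          then have "z \<inter> plaq d p = {t}" using sub p(2) by blast
          then show False using ev by simp
        qed
      qed
    qed
  qed
  show ?thesis using main zR by blast
qed

lemma tf_x0: assumes "odd d" shows "tf d \<in> x0 d"
proof -
  obtain m where m: "int d = 2*m+1" "m \<ge> 0" using odd_int[OF assms(1)] by blast
  show ?thesis unfolding tf_m[OF m(1)] x0_def inx0_def using m by (simp add: inQ_up)
qed

lemma x0_Pi: "x0 d \<inter> PivS d = {}"
  unfolding x0_def PivS_def inx0_def piv_def by auto

lemma sdiff_empty: "sdiff A B = {} \<Longrightarrow> A = B" unfolding sdiff_def by auto

lemma Sprop: assumes od: "odd d" and K: "Kset d Z"
  shows "inv d Z = (0,0,0) \<or> inv d Z = (1,1,1)"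
proof -
  obtain Z' where Z': "Kset d Z'" "Z' \<inter> PivS d = {}" "inv d Z' = inv d Z" using reduce[OF od K] by blast
  show ?thesis
  proof (cases "tf d \<in> Z'")
    case False
    then have "Z' = {}" using stage2[OF od Z'(1,2)] by simp
    then show ?thesis using Z'(3) by (simp add: inv_def Qs_def)
  next
    case True
    have "sdiff Z' (x0 d) = {}"
    proof (rule stage2[OF od])
      show "Kset d (sdiff Z' (x0 d))" by (rule Kset_sdiff[OF Z'(1) Kset_x0[OF od]])
      show "sdiff Z' (x0 d) \<inter> PivS d = {}" using Z'(2) x0_Pi unfolding sdiff_def by blast
      show "tf d \<notin> sdiff Z' (x0 d)" using True tf_x0[OF od] unfolding sdiff_def by blast
    qed
    then have "Z' = x0 d" by (rule sdiff_empty)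
    moreover have "inv d (x0 d) = (1,1,1)"
      using x0_props[OF od] unfolding inv_def by (simp add: odd_iff_mod_2_eq_one[symmetric])
    ultimately show ?thesis using Z'(3) by simp
  qed
qed


lemma S1: assumes "odd d" "Kset d Z" shows "Qs Z mod 4 = int (card Z) mod 2"
  using Sprop[OF assms] unfolding inv_def by auto

lemma S2: assumes od: "odd d" shows "odd (card (cc_qubits d))" "Qs (cc_qubits d) mod 4 = 1"
proof -
  have "cc_qubits d \<inter> x0 d = x0 d" using x0_props(3)[OF od] by blast
  then have "int (card (cc_qubits d \<inter> x0 d)) mod 2 = 1" using x0_props(2)[OF od]
    by (simp add: odd_iff_mod_2_eq_one[symmetric])
  then have "inv d (cc_qubits d) = (1,1,1)" using Sprop[OF od Kset_Q[OF od]] unfolding inv_def by auto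
  then have "Qs (cc_qubits d) mod 4 = 1" "int (card (cc_qubits d)) mod 2 = 1" unfolding inv_def by auto
  then show "odd (card (cc_qubits d))" "Qs (cc_qubits d) mod 4 = 1" by presburger+
qed

lemma connected: assumes Y: "Y \<subseteq> cc_qubits d"
  and E: "\<And>s t. {s,t} \<in> cc_edges d \<Longrightarrow> (s \<in> Y \<longleftrightarrow> t \<in> Y)"
  shows "Y = {} \<or> Y = cc_qubits d"
proof -
  have main: "\<forall>t. r3 t = n \<longrightarrow> t \<in> cc_qubits d \<longrightarrow> (t \<in> Y \<longleftrightarrow> (1,0,True) \<in> Y)" for n
  proof (induction n rule: less_induct)
    case (less n)
    show ?case
    proof (intro allI impI)
      fix t assume tn: "r3 t = n" and tQ: "t \<in> cc_qubits d"
      show "t \<in> Y \<longleftrightarrow> (1,0,True) \<in> Y"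
      proof (cases "t = (1,0,True)")
        case True then show ?thesis by simp
      next
        case False
        note c = conn_step[OF tQ False]
        then have "nb t \<in> Y \<longleftrightarrow> (1,0,True) \<in> Y" using less.IH tn by blast
        moreover have "t \<in> Y \<longleftrightarrow> nb t \<in> Y" using E c by blast
        ultimately show ?thesis by blast
      qed
    qed
  qed
  show ?thesis
  proof (cases "(1,0,True) \<in> Y")
    case True then have "cc_qubits d \<subseteq> Y" using main by blast
    then show ?thesis using Y by blast
  next
    case False then have "Y = {}" using main Y by blast
    then show ?thesis by blast
  qed
qed

lemma f2span_parity: assumes "\<And>A. A \<in> G \<Longrightarrow> finite A \<and> even (card (Y \<inter> A))" and "B \<in> f2span G"
  shows "finite B \<and> even (card (Y \<inter> B))"
  using assms(2)
proof (induction B rule: f2span.induct)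
  case zero then show ?case by simp
next
  case (add A B)
  have fA: "finite A" "even (card (Y \<inter> A))" using assms(1)[OF add.hyps(1)] by auto
  have eq: "Y \<inter> ((A - B) \<union> (B - A)) = sdiff A B \<inter> Y" unfolding sdiff_def by auto
  have "even (card (sdiff A B \<inter> Y))"
    by (rule even_card_sdiff) (use fA add.IH in \<open>auto simp: Int_commute\<close>)
  then show ?case using fA add.IH eq by auto
qed



definition phi :: "nat \<Rightarrow> sq \<Rightarrow> real" where
  "phi d q = (case q of (l,t) \<Rightarrow> if l = d then 1/4 else (if odd l then 1 else -1) * of_int (Qs (cc_qubits d) * sg t) / 4)"

lemma card_lift: "card {q \<in> lift l A. x q} = card (A \<inter> {t. x (l,t)})"
proof -
  have "{q \<in> lift l A. x q} = Pair l ` (A \<inter> {t. x (l,t)})" unfolding lift_def by auto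
  then show ?thesis by (simp add: card_image inj_on_def)
qed

lemma card_lift2: assumes "l1 \<noteq> l2" "finite A" "finite B"
  shows "card {q \<in> lift l1 A \<union> lift l2 B. x q} = card (A \<inter> {t. x (l1,t)}) + card (B \<inter> {t. x (l2,t)})"
proof -
  have "{q \<in> lift l1 A \<union> lift l2 B. x q} = {q \<in> lift l1 A. x q} \<union> {q \<in> lift l2 B. x q}" by auto
  moreover have "{q \<in> lift l1 A. x q} \<inter> {q \<in> lift l2 B. x q} = {}" using assms(1) unfolding lift_def by auto
  moreover have "finite {q \<in> lift l1 A. x q}" "finite {q \<in> lift l2 B. x q}" using assms(2,3) unfolding lift_def by auto
  ultimately show ?thesis by (simp add: card_Un_disjoint card_lift)
qed

lemma ZG_mem:
  assumes "d = 2*m+1" "1 \<le> k" "k \<le> m" "p \<in> cc_plaqs d"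
  shows "lift (2*k-1) (e p) \<union> lift (2*k) (e p) \<in> stack_ZG d e"
        "lift (2*k-1) (plaq d p) \<in> stack_ZG d e"
        "lift (2*k-1) (plaq d p) \<union> lift (2*k) (plaq d p) \<in> stack_ZG d e"
proof -
  have dm: "(d - 1) div 2 = m" using assms(1) by simp
  show "lift (2*k-1) (e p) \<union> lift (2*k) (e p) \<in> stack_ZG d e"
    unfolding stack_ZG_def dm apply (rule UnI1, rule UnI1, rule UnI1) using assms(2-4) by blast
  show "lift (2*k-1) (plaq d p) \<in> stack_ZG d e"
    unfolding stack_ZG_def dm apply (rule UnI1, rule UnI1, rule UnI2) using assms(2-4) by blast
  show "lift (2*k-1) (plaq d p) \<union> lift (2*k) (plaq d p) \<in> stack_ZG d e"
    unfolding stack_ZG_def dm apply (rule UnI1, rule UnI2) using assms(2-4) by blast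
qed

lemma ZG_mem4:
  assumes "d = 2*m+1" "1 \<le> k" "k \<le> m"
  shows "lift (2*k) (layer_qubits d (2*k)) \<union> lift (2*k+1) (layer_qubits d (2*k+1)) \<in> stack_ZG d e"
proof -
  have dm: "(d - 1) div 2 = m" using assms(1) by simp
  show ?thesis unfolding stack_ZG_def dm apply (rule UnI2) using assms(2-3) by blast
qed

lemma sum_pairs: "(\<Sum>l\<in>{1..2*m}. f l) = (\<Sum>k\<in>{1..m}. f (2*k-1) + f (2*k :: nat)) " for f :: "nat \<Rightarrow> 'a::comm_monoid_add"
proof (induction m)
  case 0 then show ?case by simp
next
  case (Suc m)
  have "{1..2*Suc m} = insert (2*m+2) (insert (2*m+1) {1..2*m})" by auto
  then have "(\<Sum>l\<in>{1..2*Suc m}. f l) = f (2*m+2) + (f (2*m+1) + (\<Sum>l\<in>{1..2*m}. f l))" by simp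
  also have "\<dots> = (\<Sum>k\<in>{1..m}. f (2*k-1) + f (2*k)) + (f (2*Suc m - 1) + f (2*Suc m))"
    using Suc.IH by (simp add: algebra_simps)
  also have "\<dots> = (\<Sum>k\<in>{1..Suc m}. f (2*k-1) + f (2*k))" by simp
  finally show ?case .
qed

lemma sum_pairs2: "(\<Sum>l\<in>{2..2*m+1}. f l) = (\<Sum>k\<in>{1..m}. f (2*k) + f (2*k+1 :: nat)) " for f :: "nat \<Rightarrow> 'a::comm_monoid_add"
proof (induction m)
  case 0 then show ?case by simp
next
  case (Suc m)
  have "{2..2*Suc m+1} = insert (2*m+3) (insert (2*m+2) {2..2*m+1})" by auto
  then have "(\<Sum>l\<in>{2..2*Suc m+1}. f l) = f (2*m+3) + (f (2*m+2) + (\<Sum>l\<in>{2..2*m+1}. f l))" by simp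
  also have "\<dots> = (\<Sum>k\<in>{1..m}. f (2*k) + f (2*k+1)) + (f (2*Suc m) + f (2*Suc m + 1))"
    using Suc.IH by (simp add: algebra_simps eval_nat_numeral)
  also have "\<dots> = (\<Sum>k\<in>{1..Suc m}. f (2*k) + f (2*k+1))" by simp
  finally show ?case .
qed

lemma telescope: "(\<Sum>k\<in>{1..m}. f k - f (Suc k)) = f 1 - f (Suc m)" for f :: "nat \<Rightarrow> int"
  by (induction m) simp_all


lemma edge_two: assumes "{s,t} \<in> cc_edges d" shows "s \<noteq> t"
  using assms unfolding cc_edges_def by (auto simp: doubleton_eq_iff)

lemma edge_finite: assumes "E \<in> cc_edges d" shows "finite E"
  using assms unfolding cc_edges_def by auto

lemma even_pair_iff: assumes "s \<noteq> t" shows "even (card (Y \<inter> {s,t})) \<longleftrightarrow> (s \<in> Y \<longleftrightarrow> t \<in> Y)"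
  using assms by (cases "s \<in> Y"; cases "t \<in> Y") auto

lemma T_mod: fixes Q1 D a :: int
  assumes "Q1 mod 4 = a" "D mod 4 = 1"
  shows "(D * (2*Q1 - D)) mod 8 = (2*a - 1) mod 8"
proof -
  obtain i where i: "Q1 = a + 4*i" using assms(1) by (metis mod_div_mult_eq add.commute mult.commute)
  obtain j where j: "D = 1 + 4*j" using assms(2) by (metis mod_div_mult_eq add.commute mult.commute)
  have "D * (2*Q1 - D) = (2*a - 1) + 8*(i - j + j*a - 2*j*j + 4*i*j)" unfolding i j by (simp add: algebra_simps)
  then show ?thesis by (metis mod_mult_self2 mult.commute)
qed


lemma phase_count:
  fixes x :: "sq \<Rightarrow> bool"
  assumes od: "odd d" and ve: "valid_edge_choice d e"
    and sup: "{q. x q} \<subseteq> stack_qubits d"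
    and ev: "\<And>B. B \<in> stack_ZG d e \<Longrightarrow> even (card {q\<in>B. x q})"
  shows "\<exists>N::int. (\<Sum>q\<in>{q\<in>stack_qubits d. x q}. phi d q) = of_int N / 4
            \<and> N mod 8 = int (card {q\<in>stack_qubits d. x q}) mod 2"
proof -
  obtain m where dm: "d = 2*m+1" using od oddE by blast
  define L where "L l = {t. x (l,t)}" for l
  define Q where "Q = cc_qubits d"
  define \<Delta> where "\<Delta> = Qs Q"
  have Lsub: "L l \<subseteq> layer_qubits d l" for l using sup unfolding L_def stack_qubits_def by auto
  have Lrange: "L l \<noteq> {} \<Longrightarrow> 1 \<le> l \<and> l \<le> d" for l using sup unfolding L_def stack_qubits_def by auto
  have LQ: "1 \<le> l \<Longrightarrow> l \<le> 2*m \<Longrightarrow> L l \<subseteq> Q" for l using Lsub[of l] dm unfolding layer_qubits_def Q_def by auto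
  have Ld: "L d \<subseteq> {(0,0,True)}" using Lsub[of d] unfolding layer_qubits_def by simp
  have finL: "finite (L l)" for l
    by (rule finite_subset[OF Lsub]) (simp add: layer_qubits_def)
  have Xeq: "{q\<in>stack_qubits d. x q} = Sigma {1..d} L"
  proof
    show "{q\<in>stack_qubits d. x q} \<subseteq> Sigma {1..d} L" unfolding L_def stack_qubits_def by auto
    show "Sigma {1..d} L \<subseteq> {q\<in>stack_qubits d. x q}" using sup unfolding L_def by auto
  qed
  have cl: "card {q \<in> lift l A. x q} = card (A \<inter> L l)" for l A unfolding L_def by (rule card_lift)
  have cl2: "l1 \<noteq> l2 \<Longrightarrow> finite A \<Longrightarrow> finite B \<Longrightarrow> card {q \<in> lift l1 A \<union> lift l2 B. x q} = card (A \<inter> L l1) + card (B \<inter> L l2)" for l1 l2 A B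
    unfolding L_def by (rule card_lift2)
  have K: "Kset d (L (2*k-1)) \<and> Kset d (L (2*k))" if k: "1 \<le> k" "k \<le> m" for k
  proof -
    have s1: "L (2*k-1) \<subseteq> cc_qubits d" "L (2*k) \<subseteq> cc_qubits d" using LQ[of "2*k-1"] LQ[of "2*k"] k unfolding Q_def by auto
    have e1: "even (card (L (2*k-1) \<inter> plaq d p))" if p: "p \<in> cc_plaqs d" for p
      using ev[OF ZG_mem(2)[OF dm k p]] cl by (simp add: Int_commute)
    have e2: "even (card (plaq d p \<inter> L (2*k-1)) + card (plaq d p \<inter> L (2*k)))" if p: "p \<in> cc_plaqs d" for p
      using ev[OF ZG_mem(3)[OF dm k p]] cl2[of "2*k-1" "2*k"] k by simp
    have e3: "even (card (L (2*k) \<inter> plaq d p))" if p: "p \<in> cc_plaqs d" for p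
      using e1[OF p] e2[OF p] by (simp add: Int_commute)
    show ?thesis unfolding Kset_def using s1 e1 e3 by auto
  qed
  have F3: "even (card (L (2*k)) + card (L (2*k+1)))" if k: "1 \<le> k" "k \<le> m" for k
  proof -
    have "finite (layer_qubits d l)" for l by (simp add: layer_qubits_def)
    then have "even (card (layer_qubits d (2*k) \<inter> L (2*k)) + card (layer_qubits d (2*k+1) \<inter> L (2*k+1)))"
      using ev[OF ZG_mem4[OF dm k]] cl2[of "2*k" "2*k+1"] by simp
    moreover have "layer_qubits d l \<inter> L l = L l" for l using Lsub by blast
    ultimately show ?thesis by simp
  qed
  have Yc: "sdiff (L (2*k-1)) (L (2*k)) = {} \<or> sdiff (L (2*k-1)) (L (2*k)) = Q" if k: "1 \<le> k" "k \<le> m" for k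
  proof -
    define Y where "Y = sdiff (L (2*k-1)) (L (2*k))"
    have KY: "Kset d Y" unfolding Y_def using K[OF k] Kset_sdiff by blast
    have YQ: "Y \<subseteq> Q" using KY unfolding Kset_def Q_def by blast
    have ep: "e p \<in> cc_edges d" "finite (e p)" if "p \<in> cc_plaqs d" for p
      using ve that edge_finite unfolding valid_edge_choice_def by blast+
    have Ye: "even (card (Y \<inter> e p))" if p: "p \<in> cc_plaqs d" for p
    proof -
      have a: "even (card (e p \<inter> L (2*k-1)) + card (e p \<inter> L (2*k)))"
        using ev[OF ZG_mem(1)[OF dm k p]] cl2[of "2*k-1" "2*k"] k ep[OF p] by simp
      have "int (card (Y \<inter> e p)) = int (card (L (2*k-1) \<inter> e p)) + int (card (L (2*k) \<inter> e p)) - 2 * int (card (L (2*k-1) \<inter> e p \<inter> (L (2*k) \<inter> e p)))"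
        unfolding Y_def sdiff_Int by (rule card_sdiff) (use finL in auto)
      then show ?thesis using a by (simp add: Int_commute) presburger
    qed
    have YP: "even (card (Y \<inter> plaq d p))" if "p \<in> cc_plaqs d" for p using KY that unfolding Kset_def by blast
    let ?G = "e ` cc_plaqs d \<union> plaq d ` cc_plaqs d"
    have G: "finite A \<and> even (card (Y \<inter> A))" if "A \<in> ?G" for A
      using that ep Ye YP by auto
    have YE: "even (card (Y \<inter> E))" if "E \<in> cc_edges d" for E
      using f2span_parity[OF G] ve that unfolding valid_edge_choice_def by blast
    have "Y = {} \<or> Y = cc_qubits d"
    proof (rule connected)
      show "Y \<subseteq> cc_qubits d" using YQ Q_def by simp
      fix s t assume st: "{s,t} \<in> cc_edges d"
      show "s \<in> Y \<longleftrightarrow> t \<in> Y" using YE[OF st] even_pair_iff[OF edge_two[OF st]] by blast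
    qed
    then show ?thesis unfolding Y_def Q_def by blast
  qed
  have oQ: "odd (card Q)" and D1: "\<Delta> mod 4 = 1" using S2[OF od] unfolding Q_def \<Delta>_def by auto
  have finQ: "finite Q" unfolding Q_def by simp
  define a where "a k = int (card (L (2*k-1))) mod 2" for k
  define T where "T k = \<Delta> * (Qs (L (2*k-1)) - Qs (L (2*k)))" for k
  have Tk: "T k mod 8 = (a k - a (Suc k)) mod 8" if k: "1 \<le> k" "k \<le> m" for k
  proof -
    have aS: "a (Suc k) = int (card (L (2*k+1))) mod 2" unfolding a_def by simp
    have f3: "even (card (L (2*k)) + card (L (2*k+1)))" using F3[OF k] .
    consider (e) "sdiff (L (2*k-1)) (L (2*k)) = {}" | (f) "sdiff (L (2*k-1)) (L (2*k)) = Q" using Yc[OF k] by blast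
    then show ?thesis
    proof cases
      case e
      then have eq: "L (2*k-1) = L (2*k)" by (rule sdiff_empty)
      then have "T k = 0" unfolding T_def by simp
      moreover have "a k = a (Suc k)" using aS f3 unfolding a_def eq by presburger
      ultimately show ?thesis by simp
    next
      case f
      have s1: "L (2*k-1) \<subseteq> Q" "L (2*k) \<subseteq> Q" using K[OF k] unfolding Kset_def Q_def by auto
      have eq: "L (2*k) = Q - L (2*k-1)" using f s1 unfolding sdiff_def by blast
      have q2: "Qs (L (2*k)) = \<Delta> - Qs (L (2*k-1))"
        unfolding eq \<Delta>_def Qs_def using sum_diff[OF finQ s1(1)] by simp
      have c2: "int (card (L (2*k))) = int (card Q) - int (card (L (2*k-1)))"
        unfolding eq using card_Diff_subset[OF finite_subset[OF s1(1) finQ] s1(1)] card_mono[OF finQ s1(1)] by simp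
      have s1': "Qs (L (2*k-1)) mod 4 = a k" unfolding a_def using S1[OF od] K[OF k] by blast
      have Tf: "T k = \<Delta> * (2 * Qs (L (2*k-1)) - \<Delta>)" unfolding T_def q2 by simp
      have "T k mod 8 = (2 * a k - 1) mod 8" unfolding Tf by (rule T_mod[OF s1' D1])
      moreover have "a (Suc k) = 1 - a k" using aS f3 c2 oQ unfolding a_def by presburger
      ultimately show ?thesis by (metis diff_diff_eq2 mult_2 add_diff_cancel_left')
    qed
  qed
  have sumT: "(\<Sum>k\<in>{1..m}. T k) mod 8 = (a 1 - a (Suc m)) mod 8"
  proof -
    have e1: "(\<Sum>k\<in>{1..m}. T k mod 8) = (\<Sum>k\<in>{1..m}. (a k - a (Suc k)) mod 8)" by (rule sum.cong) (auto simp: Tk)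
    have "(\<Sum>k\<in>{1..m}. T k) mod 8 = (\<Sum>k\<in>{1..m}. T k mod 8) mod 8" by (simp add: mod_sum_eq)
    also have "\<dots> = (\<Sum>k\<in>{1..m}. (a k - a (Suc k)) mod 8) mod 8" by (simp only: e1)
    also have "\<dots> = (\<Sum>k\<in>{1..m}. a k - a (Suc k)) mod 8" by (simp add: mod_sum_eq)
    also have "\<dots> = (a 1 - a (Suc m)) mod 8" by (simp only: telescope)
    finally show ?thesis .
  qed
  have cLd: "card (L d) \<le> 1" using card_mono[OF _ Ld] by simp
  have dd: "2 * Suc m - 1 = d" using dm by simp
  have aSm: "a (Suc m) = int (card (L d))"
  proof -
    have "a (Suc m) = int (card (L d)) mod 2" unfolding a_def dd ..
    also have "\<dots> = int (card (L d))" using cLd by (cases "card (L d)") auto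
    finally show ?thesis .
  qed
  have a01: "0 \<le> a 1" "a 1 < 2" unfolding a_def by auto
  define N where "N = int (card (L d)) + (\<Sum>k\<in>{1..m}. T k)"
  have Nmod: "N mod 8 = a 1"
  proof -
    have "N mod 8 = (int (card (L d)) + (\<Sum>k\<in>{1..m}. T k) mod 8) mod 8" unfolding N_def by (simp add: mod_add_right_eq)
    also have "\<dots> = (int (card (L d)) + (a 1 - int (card (L d))) mod 8) mod 8" using sumT aSm by simp
    also have "\<dots> = a 1 mod 8" by (simp add: mod_add_right_eq)
    also have "\<dots> = a 1" using a01 by simp
    finally show ?thesis .
  qed
  define f where "f l = (\<Sum>t\<in>L l. phi d (l,t))" for l
  have sum1: "(\<Sum>q\<in>{q\<in>stack_qubits d. x q}. phi d q) = (\<Sum>l\<in>{1..d}. f l)"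
    unfolding Xeq f_def by (subst sum.Sigma) (auto simp: finL)
  have fd: "f d = of_nat (card (L d)) / 4" unfolding f_def phi_def by simp
  have fl: "f l = (if odd l then 1 else -1) * of_int (\<Delta> * Qs (L l)) / 4" if "l \<noteq> d" for l
  proof -
    have "f l = (\<Sum>t\<in>L l. ((if odd l then 1 else -1) / 4) * of_int (\<Delta> * sg t))"
      unfolding f_def phi_def \<Delta>_def Q_def using that by (intro sum.cong) auto
    also have "\<dots> = ((if odd l then 1 else -1) / 4) * of_int (\<Delta> * Qs (L l))"
      unfolding Qs_def by (simp add: sum_distrib_left of_int_sum)
    finally show ?thesis by simp
  qed
  have fpair: "f (2*k-1) + f (2*k) = of_int (T k) / 4" if k: "1 \<le> k" "k \<le> m" for k
  proof -
    have h: "2*k-1 \<noteq> d" "2*k \<noteq> d" "odd (2*k-1)" using k dm by auto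
    show ?thesis unfolding fl[OF h(1)] fl[OF h(2)] T_def using h(3) by (simp add: algebra_simps diff_divide_distrib)
  qed
  have "{1..d} = insert d {1..2*m}" using dm by auto
  then have "(\<Sum>l\<in>{1..d}. f l) = f d + (\<Sum>l\<in>{1..2*m}. f l)" using dm by simp
  also have "\<dots> = f d + (\<Sum>k\<in>{1..m}. f (2*k-1) + f (2*k))" by (simp only: sum_pairs)
  also have "\<dots> = f d + (\<Sum>k\<in>{1..m}. of_int (T k) / 4)"
    proof -
      have "(\<Sum>k\<in>{1..m}. f (2*k-1) + f (2*k)) = (\<Sum>k\<in>{1..m}. of_int (T k) / 4)"
        by (rule sum.cong) (use fpair in auto)
      then show ?thesis by simp
    qed
  also have "\<dots> = of_int N / 4" unfolding fd N_def by (simp add: sum_divide_distrib[symmetric] of_int_sum add_divide_distrib)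
  finally have sumeq: "(\<Sum>q\<in>{q\<in>stack_qubits d. x q}. phi d q) = of_int N / 4" using sum1 by simp
  have cardX: "int (card {q\<in>stack_qubits d. x q}) mod 2 = a 1"
  proof -
    have "card {q\<in>stack_qubits d. x q} = (\<Sum>l\<in>{1..d}. card (L l))" unfolding Xeq by (simp add: card_SigmaI finL)
    also have "\<dots> = card (L 1) + (\<Sum>l\<in>{2..2*m+1}. card (L l))"
    proof -
      have "{1..d} = insert 1 {2..2*m+1}" using dm by auto
      then show ?thesis by simp
    qed
    also have "\<dots> = card (L 1) + (\<Sum>k\<in>{1..m}. card (L (2*k)) + card (L (2*k+1)))" by (simp only: sum_pairs2)
    finally have e: "card {q\<in>stack_qubits d. x q} = card (L 1) + (\<Sum>k\<in>{1..m}. card (L (2*k)) + card (L (2*k+1)))" .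
    have "even (\<Sum>k\<in>{1..m}. card (L (2*k)) + card (L (2*k+1)))" using F3 by (intro dvd_sum) auto
    then obtain w where w: "(\<Sum>k\<in>{1..m}. card (L (2*k)) + card (L (2*k+1))) = 2*w" by (rule evenE)
    have "card {q\<in>stack_qubits d. x q} = card (L 1) + 2*w" using e w by simp
    then have "int (card {q\<in>stack_qubits d. x q}) = int (card (L 1)) + 2 * int w" by simp
    then show ?thesis unfolding a_def by simp
  qed
  show ?thesis using sumeq Nmod cardX by auto
qed


lemma cis_N: fixes N :: int assumes "N mod 8 = P" shows "cis (pi * (of_int N / 4)) = cis (pi * of_int P / 4)"
proof -
  have "N = P + 8 * (N div 8)" using assms by (metis mod_div_mult_eq add.commute mult.commute)
  then have "real_of_int N = real_of_int P + 8 * real_of_int (N div 8)"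
    by (metis of_int_add of_int_mult of_int_numeral)
  then have e: "pi * (of_int N / 4) = pi * of_int P / 4 + 2 * pi * of_int (N div 8)"
    by (simp add: field_simps)
  have "cis (pi * (of_int N / 4)) = cis (pi * of_int P / 4) * cis (2 * pi * of_int (N div 8))"
    unfolding e cis_mult ..
  also have "cis (2 * pi * of_int (N div 8)) = 1" by (rule cis_multiple_2pi) simp
  finally show ?thesis by simp
qed

lemma neg1_pow_eq1: "((-1::complex) ^ k = 1) \<longleftrightarrow> even k"
  by (cases "even k") auto

lemma aux1: "(1 + c) / 2 * y + (1 - c) / 2 * (y::complex) = y" by (simp add: field_simps)
lemma aux2: "(1 + c) / 2 * y + (1 - c) / 2 * (- y) = c * (y::complex)" by (simp add: field_simps)

theorem corollary1:
  fixes d :: nat and e :: "int \<times> int \<Rightarrow> cq set"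
  assumes "odd d" and "3 \<le> d" and "valid_edge_choice d e"
  shows "\<exists>\<phi> :: sq \<Rightarrow> real. \<exists>b :: bool.
           acts_as_logical_phase
             (\<lambda>\<psi>. if b then pauliZ (stack_qubits d) (zrot (stack_qubits d) \<phi> \<psi>)
                   else zrot (stack_qubits d) \<phi> \<psi>)
             (pauliZ (stack_qubits d)) (pi / 4) (stacked_code_space d e)"
proof (intro exI[of _ "phi d"] exI[of _ False])
  let ?S = "stack_qubits d"
  show "acts_as_logical_phase (\<lambda>\<psi>. if False then pauliZ ?S (zrot ?S (phi d) \<psi>) else zrot ?S (phi d) \<psi>)
          (pauliZ ?S) (pi / 4) (stacked_code_space d e)"
    unfolding acts_as_logical_phase_def
  proof (intro ballI allI)
    fix \<psi> x assume \<psi>: "\<psi> \<in> stacked_code_space d e"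
    let ?X = "{q \<in> ?S. x q}"
    show "(if False then pauliZ ?S (zrot ?S (phi d) \<psi>) else zrot ?S (phi d) \<psi>) x =
          (1 + cis (pi / 4)) / 2 * \<psi> x + (1 - cis (pi / 4)) / 2 * pauliZ ?S \<psi> x"
    proof (cases "\<psi> x = 0")
      case True then show ?thesis unfolding zrot_def pauliZ_def by simp
    next
      case False
      have sup: "{q. x q} \<subseteq> ?S" using \<psi> False unfolding stacked_code_space_def code_space_def supported_on_def by blast
      have ev: "even (card {q\<in>B. x q})" if B: "B \<in> stack_ZG d e" for B
      proof -
        have "pauliZ B \<psi> = \<psi>" using \<psi> B unfolding stacked_code_space_def code_space_def by blast
        then have "pauliZ B \<psi> x = \<psi> x" by simp
        then have "(-1) ^ card {q \<in> B. x q} * \<psi> x = \<psi> x" unfolding pauliZ_def .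
        then have "(-1::complex) ^ card {q \<in> B. x q} = 1" using False by simp
        then show ?thesis using neg1_pow_eq1 by blast
      qed
      obtain N where N: "(\<Sum>q\<in>?X. phi d q) = of_int N / 4" "N mod 8 = int (card ?X) mod 2"
        using phase_count[OF assms(1) assms(3) sup ev] by blast
      have "zrot ?S (phi d) \<psi> x = cis (pi * (\<Sum>q\<in>?X. phi d q)) * \<psi> x" unfolding zrot_def ..
      also have "\<dots> = cis (pi * of_int (int (card ?X) mod 2) / 4) * \<psi> x" unfolding N(1) cis_N[OF N(2)] ..
      finally have lhs: "zrot ?S (phi d) \<psi> x = cis (pi * of_int (int (card ?X) mod 2) / 4) * \<psi> x" .
      have pz: "pauliZ ?S \<psi> x = (-1) ^ card ?X * \<psi> x" unfolding pauliZ_def ..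
      show ?thesis
      proof (cases "even (card ?X)")
        case True
        then have "int (card ?X) mod 2 = 0" by presburger
        moreover have "(-1::complex) ^ card ?X = 1" using True by simp
        ultimately show ?thesis unfolding if_False lhs pz using aux1[of "cis (pi / 4)" "\<psi> x"] by simp
      next
        case odd: False
        then have "int (card ?X) mod 2 = 1" by presburger
        moreover have "(-1::complex) ^ card ?X = -1" using odd by simp
        ultimately show ?thesis unfolding if_False lhs pz using aux2[of "cis (pi / 4)" "\<psi> x"] by simp
      qed
    qed
  qed
qed

end
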